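(* Let $T$ be Takagi's function on $[0,1]$, $T(x)=\sum_{n=1}^\infty 2^{-n}\phi^{(n)}(x)$, with $\phi$ the tent map $\phi(x)=2x$ on $[0,1/2]$, $\phi(x)=2-2x$ on $[1/2,1]$. Let $x\in(0,1)$ be non-dyadic, with binary expansion $x=\sum_{k\ge1}2^{-k}\varepsilon_k$, and write $x=\sum_{n\ge1}2^{-a_n}$, $1-x=\sum_{n\ge1}2^{-b_n}$ with $\{a_n\},\{b_n\}$ strictly increasing sequences of positive integers. Suppose the limit $d_1(x):=\lim_{n\to\infty}\frac1n\sum_{k=1}^n\varepsilon_k$ exists. If either (a) $0<d_1(x)<1/2$, or (b) $d_1(x)=0$ and $\limsup_{n\to\infty}a_{n+1}/a_n<2$, then $T'(x)=+\infty$. If either (a) $1/2<d_1(x)<1$, or (b) $d_1(x)=1$ and $\limsup_{n\to\infty}b_{n+1}/b_n<2$, then $T'(x)=-\infty$.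
   Context: $T'(x)=\pm\infty$ means the two-sided limit $\lim_{h\to0}(T(x+h)-T(x))/h$ equals $\pm\infty$. A dyadic point is one of the form $k/2^m$. *)

theory Defs
  imports "HOL-Analysis.Analysis" "HOL-Library.Liminf_Limsup"
begin

definition tent :: "real \<Rightarrow> real" where
  "tent x = (if x \<le> 1/2 then 2 * x else 2 - 2 * x)"

definition takagi :: "real \<Rightarrow> real" where
  "takagi x = (\<Sum>n. (1/2) ^ Suc n * (tent ^^ Suc n) x)"

definition dyadic :: "real \<Rightarrow> bool" where
  "dyadic x \<longleftrightarrow> (\<exists>(k::int) (m::nat). x = real_of_int k / 2 ^ m)"

end

theory Submission
  imports Defs
begin


lemma tent_sym: "tent (1 - z) = tent z"
  unfolding tent_def by auto

lemma tent_range: "0 \<le> z \<Longrightarrow> z \<le> 1 \<Longrightarrow> 0 \<le> tent z \<and> tent z \<le> 1"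
  unfolding tent_def by auto

lemma tent_iter_range: "0 \<le> z \<Longrightarrow> z \<le> 1 \<Longrightarrow> 0 \<le> (tent ^^ n) z \<and> (tent ^^ n) z \<le> 1"
  by (induction n) (auto simp: tent_range)

lemma tent_iter_range': "0 \<le> z \<Longrightarrow> z \<le> 1 \<Longrightarrow> 0 \<le> tent ((tent ^^ n) z) \<and> tent ((tent ^^ n) z) \<le> 1"
  using tent_iter_range[of z "Suc n"] by simp

lemma takagi_summable:
  assumes "0 \<le> z" "z \<le> 1"
  shows "summable (\<lambda>n. (1/2::real) ^ Suc n * (tent ^^ Suc n) z)"
proof (rule summable_comparison_test[where g = "\<lambda>n. (1/2::real) ^ Suc n"])
  show "\<exists>N. \<forall>n\<ge>N. norm ((1/2::real) ^ Suc n * (tent ^^ Suc n) z) \<le> (1/2) ^ Suc n"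
    using tent_iter_range'[OF assms] by (auto simp: abs_mult intro!: mult_left_le)
  show "summable (\<lambda>n. (1/2::real) ^ Suc n)"
    using power_half_series sums_summable by blast
qed

lemma takagi_bounds:
  assumes "0 \<le> z" "z \<le> 1"
  shows "0 \<le> takagi z \<and> takagi z \<le> 1"
proof
  show "0 \<le> takagi z" unfolding takagi_def
    using takagi_summable[OF assms] tent_iter_range'[OF assms]
    by (intro suminf_nonneg) auto
  have "takagi z \<le> (\<Sum>n. (1/2::real) ^ Suc n)" unfolding takagi_def
    using takagi_summable[OF assms] tent_iter_range'[OF assms] power_half_series
    by (intro suminf_le) (auto intro!: mult_left_le sums_summable)
  thus "takagi z \<le> 1" using power_half_series sums_unique by fastforce
qed

lemma takagi_sym: "takagi (1 - z) = takagi z"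
  unfolding takagi_def by (simp only: funpow_Suc_right o_def tent_sym)

lemma takagi_fe:
  assumes "0 \<le> z" "z \<le> 1"
  shows "takagi z = tent z / 2 + takagi (tent z) / 2"
proof -
  let ?f = "\<lambda>n. (1/2::real) ^ Suc n * (tent ^^ Suc n) z"
  have s: "summable ?f" by (rule takagi_summable[OF assms])
  have "(\<Sum>n. ?f (Suc n)) = suminf ?f - ?f 0" by (rule suminf_split_head[OF s])
  moreover have "(\<lambda>n. ?f (Suc n)) = (\<lambda>n. (1/2) * ((1/2::real) ^ Suc n * (tent ^^ Suc n) (tent z)))"
    by (rule ext) (simp only: funpow_Suc_right[of "Suc _"] o_def power_Suc mult.assoc)
  moreover have "(\<Sum>n. (1/2) * ((1/2::real) ^ Suc n * (tent ^^ Suc n) (tent z))) = (1/2) * takagi (tent z)"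
    unfolding takagi_def
    using takagi_summable tent_range[OF assms] by (intro suminf_mult) auto
  ultimately have "takagi (tent z) / 2 = takagi z - tent z / 2"
    unfolding takagi_def by simp
  thus ?thesis by linarith
qed

lemma takagi_low: "0 \<le> z \<Longrightarrow> z \<le> 1/2 \<Longrightarrow> takagi z = z + takagi (2*z) / 2"
  using takagi_fe[of z] by (simp add: tent_def)

lemma takagi_high: assumes "1/2 \<le> z" "z \<le> 1" shows "takagi z = (1 - z) + takagi (2*z - 1) / 2"
proof (cases "z = 1/2")
  case True
  have "takagi (1/2) = 1/2 + takagi 1 / 2" using takagi_low[of "1/2"] by simp
  moreover have zz: "z = 1/2" using True by auto
  ultimately show ?thesis using takagi_sym[of 0] unfolding zz by simp
next
  case False thus ?thesis using assms takagi_fe[of z] takagi_sym[of "2*z-1"] by (auto simp: tent_def)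
qed

lemma takagi_small:
  "0 \<le> s \<Longrightarrow> s \<le> (1/2)^k \<Longrightarrow> takagi s \<le> real k * s + (1/2)^k"
proof (induction k arbitrary: s)
  case 0 thus ?case using takagi_bounds[of s] by simp
next
  case (Suc k)
  have "(1/2::real)^k \<le> 1" by (rule power_le_one) auto
  hence h: "s \<le> 1/2" using Suc.prems(2) by (auto simp: power_Suc)
  have "takagi (2 * s) \<le> real k * (2 * s) + (1/2)^k"
    using Suc.IH[of "2 * s"] Suc.prems by (auto simp: power_Suc)
  thus ?case using takagi_low[of s] h Suc.prems by (simp add: power_Suc algebra_simps)
qed



definition step :: "real \<Rightarrow> real" where
  "step z = (if z < 1/2 then 2 * z else 2 * z - 1)"

definition orb :: "real \<Rightarrow> nat \<Rightarrow> real" where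
  "orb w n = (step ^^ n) w"

definition sg :: "real \<Rightarrow> real" where
  "sg z = (if z < 1/2 then 1 else -1)"

definition Dsum :: "real \<Rightarrow> nat \<Rightarrow> real" where
  "Dsum w n = (\<Sum>k<n. sg (orb w k))"

definition good :: "real \<Rightarrow> bool" where
  "good w \<longleftrightarrow> (\<forall>k. 0 < orb w k \<and> orb w k < 1 \<and> orb w k \<noteq> 1/2)"

definition same :: "real \<Rightarrow> real \<Rightarrow> bool" where
  "same z y \<longleftrightarrow> (z < 1/2 \<and> 0 \<le> y \<and> y \<le> 1/2) \<or> (z > 1/2 \<and> 1/2 \<le> y \<and> y \<le> 1)"

lemma orb_0[simp]: "orb w 0 = w" by (simp add: orb_def)
lemma orb_Suc: "orb w (Suc n) = step (orb w n)" by (simp add: orb_def)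
lemma orb_Suc': "orb w (Suc n) = orb (step w) n" by (simp only: orb_def funpow_Suc_right o_def)
lemma orb_add: "orb w (m + n) = orb (orb w m) n" by (simp only: orb_def add.commute[of m n] funpow_add o_def)

lemma Dsum_0[simp]: "Dsum w 0 = 0" by (simp add: Dsum_def)
lemma Dsum_Suc: "Dsum w (Suc n) = Dsum w n + sg (orb w n)" by (simp add: Dsum_def)
lemma Dsum_Suc': "Dsum w (Suc n) = sg w + Dsum (step w) n"
  unfolding Dsum_def sum.lessThan_Suc_shift by (simp add: orb_Suc')
lemma Dsum_add: "Dsum w (m + n) = Dsum w m + Dsum (orb w m) n"
proof (induction n)
  case 0 thus ?case by simp
next
  case (Suc n) thus ?case by (simp add: Dsum_Suc orb_add)
qed

lemma good_step: "good w \<Longrightarrow> good (step w)"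
  unfolding good_def by (simp add: orb_Suc'[symmetric])
lemma good_orb: "good w \<Longrightarrow> good (orb w m)"
  unfolding good_def by (simp add: orb_add[symmetric])
lemma goodD: "good w \<Longrightarrow> 0 < w \<and> w < 1 \<and> w \<noteq> 1/2"
  unfolding good_def using orb_0 by metis

lemma orb_le: "orb w q \<le> 2 ^ q * w"
proof (induction q)
  case 0 thus ?case by simp
next
  case (Suc q) thus ?case by (simp add: orb_Suc step_def)
qed

lemma good_has_one: assumes "good w" shows "\<exists>q. orb w q > 1/2"
proof (rule ccontr)
  assume "\<not> ?thesis"
  hence lo: "\<And>q. orb w q < 1/2" using assms unfolding good_def by (meson linorder_neqE_linordered_idom)
  have eq: "orb w q = 2 ^ q * w" for q
  proof (induction q)
    case (Suc q) thus ?case using lo[of q] by (simp add: orb_Suc step_def)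
  qed simp
  have w0: "0 < w" using goodD[OF assms] by simp
  obtain q where "1 / w < 2 ^ q" using real_arch_pow[of 2 "1/w"] by auto
  hence "1 < 2 ^ q * w" using w0 by (simp add: field_simps)
  thus False using lo[of q] eq[of q] by simp
qed

lemma lin:
  assumes "good w" "\<forall>k<n. same (orb w k) (orb w k + 2 ^ k * h)"
  shows "takagi (w + h) - takagi w = Dsum w n * h + (takagi (orb w n + 2 ^ n * h) - takagi (orb w n)) / 2 ^ n"
  using assms
proof (induction n arbitrary: w h)
  case 0 thus ?case by simp
next
  case (Suc n)
  have s0: "same w (w + h)" using Suc.prems(2) by force
  have g: "good (step w)" using good_step[OF Suc.prems(1)] .
  have "\<forall>k<n. same (orb (step w) k) (orb (step w) k + 2 ^ k * (2 * h))"
  proof (intro allI impI)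
    fix k assume "k < n"
    hence "same (orb w (Suc k)) (orb w (Suc k) + 2 ^ Suc k * h)" using Suc.prems(2) by blast
    thus "same (orb (step w) k) (orb (step w) k + 2 ^ k * (2 * h))" by (simp add: orb_Suc' mult_ac)
  qed
  from Suc.IH[OF g this] have IH:
    "takagi (step w + 2 * h) - takagi (step w) = Dsum (step w) n * (2 * h) +
      (takagi (orb w (Suc n) + 2 ^ Suc n * h) - takagi (orb w (Suc n))) / 2 ^ n"
    by (simp add: orb_Suc' mult_ac)
  have w01: "0 < w" "w < 1" using goodD[OF Suc.prems(1)] by auto
  show ?case
  proof (cases "w < 1/2")
    case True
    hence "0 \<le> w + h" "w + h \<le> 1/2" using s0 unfolding same_def by auto
    hence e1: "takagi (w + h) = (w + h) + takagi (2 * (w + h)) / 2" using takagi_low by blast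
    have e2: "takagi w = w + takagi (2 * w) / 2" using takagi_low True w01 by auto
    have sw: "step w = 2 * w" "sg w = 1" using True by (auto simp: step_def sg_def)
    have "takagi (w + h) - takagi w = h + (takagi (step w + 2 * h) - takagi (step w)) / 2"
      using e1 e2 unfolding sw by (simp add: distrib_left)
    also have "\<dots> = h + (Dsum (step w) n * (2 * h) +
      (takagi (orb w (Suc n) + 2 ^ Suc n * h) - takagi (orb w (Suc n))) / 2 ^ n) / 2" by (simp only: IH)
    also have "\<dots> = Dsum w (Suc n) * h + (takagi (orb w (Suc n) + 2 ^ Suc n * h) - takagi (orb w (Suc n))) / 2 ^ Suc n"
      unfolding Dsum_Suc' sw by (simp add: field_simps)
    finally show ?thesis .
  next
    case False
    hence F: "w > 1/2" using goodD[OF Suc.prems(1)] by auto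
    hence "1/2 \<le> w + h" "w + h \<le> 1" using s0 unfolding same_def by auto
    hence e1: "takagi (w + h) = (1 - (w + h)) + takagi (2 * (w + h) - 1) / 2" using takagi_high by blast
    have e2: "takagi w = (1 - w) + takagi (2 * w - 1) / 2" using takagi_high F w01 by auto
    have sw: "step w = 2 * w - 1" "sg w = -1" using False by (auto simp: step_def sg_def)
    have ee: "2 * (w + h) - 1 = step w + 2 * h" using sw by simp
    have "takagi (w + h) - takagi w = - h + (takagi (step w + 2 * h) - takagi (step w)) / 2"
      using e1 e2 unfolding ee[symmetric] unfolding sw diff_divide_distrib by linarith
    also have "\<dots> = - h + (Dsum (step w) n * (2 * h) +
      (takagi (orb w (Suc n) + 2 ^ Suc n * h) - takagi (orb w (Suc n))) / 2 ^ n) / 2" by (simp only: IH)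
    also have "\<dots> = Dsum w (Suc n) * h + (takagi (orb w (Suc n) + 2 ^ Suc n * h) - takagi (orb w (Suc n))) / 2 ^ Suc n"
      unfolding Dsum_Suc' sw by (simp add: field_simps)
    finally show ?thesis .
  qed
qed



lemma le_half_pow_imp: assumes "\<And>n. c \<le> (1/2::real) ^ n" shows "c \<le> 0"
proof (rule ccontr)
  assume "\<not> c \<le> 0" hence c0: "c > 0" by simp
  obtain n where "1 / c < 2 ^ n" using real_arch_pow[of 2 "1/c"] by auto
  hence "1 < c * 2 ^ n" using c0 by (simp add: field_simps)
  hence "(1/2) ^ n < c" by (simp add: field_simps power_one_over)
  thus False using assms[of n] by simp
qed

lemma half_step: "(A::real) \<le> P \<Longrightarrow> X = A / 2 + I / 2 \<Longrightarrow> I \<le> 0 \<Longrightarrow> X \<le> (1/2) ^ Suc n" if "P = (1/2)^n"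
  using that by simp

lemma Dsum_step_low: "w < 1/2 \<Longrightarrow> Dsum (step w) j = Dsum w (Suc j) - 1"
  by (simp add: Dsum_Suc' sg_def)
lemma Dsum_step_high: "\<not> w < 1/2 \<Longrightarrow> Dsum (step w) j = Dsum w (Suc j) + 1"
  by (simp add: Dsum_Suc' sg_def)

lemma C2_aux: "good w \<Longrightarrow> (\<forall>j. I \<le> Dsum w j) \<Longrightarrow> (I + 1) * w - takagi w \<le> (1/2) ^ n"
proof (induction n arbitrary: w I)
  case 0
  have I0: "I \<le> 0" using 0(2) by (metis Dsum_0)
  have w: "0 < w" "w < 1" using goodD[OF 0(1)] by auto
  have "0 \<le> takagi w" using takagi_bounds[of w] w by auto
  moreover have "(I + 1) * w \<le> 1"
  proof (cases "I + 1 \<ge> 0")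
    case True thus ?thesis using w I0 by (smt (verit) mult_left_le)
  next
    case False thus ?thesis using w by (smt (verit) mult_nonpos_nonneg)
  qed
  ultimately show ?case by simp
next
  case (Suc n)
  have I0: "I \<le> 0" using Suc.prems(2) by (metis Dsum_0)
  have w: "0 < w" "w < 1" "w \<noteq> 1/2" using goodD[OF Suc.prems(1)] by auto
  have g: "good (step w)" using good_step[OF Suc.prems(1)] .
  show ?case
  proof (cases "w < 1/2")
    case True
    have "\<forall>j. I - 1 \<le> Dsum (step w) j" using Suc.prems(2) Dsum_step_low[OF True] by simp
    from Suc.IH[OF g this] have "I * (2 * w) - takagi (2 * w) \<le> (1/2)^n"
      using True by (simp add: step_def)
    moreover have "takagi w = w + takagi (2 * w) / 2" using takagi_low True w by auto
    hence "(I + 1) * w - takagi w = (I * (2 * w) - takagi (2 * w)) / 2" by (simp add: field_simps)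
    ultimately show ?thesis by simp
  next
    case False
    hence F: "w > 1/2" using w by auto
    have "\<forall>j. I + 1 \<le> Dsum (step w) j" using Suc.prems(2) Dsum_step_high[OF False] by simp
    from Suc.IH[OF g this] have "(2 + I) * (2 * w - 1) - takagi (2 * w - 1) \<le> (1/2)^n"
      using False by (simp add: step_def)
    moreover have "takagi w = (1 - w) + takagi (2 * w - 1) / 2" using takagi_high F w by auto
    hence "(I + 1) * w - takagi w = ((2 + I) * (2 * w - 1) - takagi (2 * w - 1)) / 2 + I / 2" by (simp add: field_simps)
    ultimately show ?thesis using I0 half_step by blast
  qed
qed

lemma C2: "good w \<Longrightarrow> (\<forall>j. I \<le> Dsum w j) \<Longrightarrow> (I + 1) * w \<le> takagi w"
  using le_half_pow_imp[of "(I + 1) * w - takagi w"] C2_aux by force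

lemma C1_aux: "good w \<Longrightarrow> (\<forall>j. I \<le> Dsum w j) \<Longrightarrow> (I - 1) * (1 - w) + takagi w \<le> (1/2) ^ n"
proof (induction n arbitrary: w I)
  case 0
  have I0: "I \<le> 0" using 0(2) by (metis Dsum_0)
  have w: "0 < w" "w < 1" using goodD[OF 0(1)] by auto
  have "takagi w \<le> 1" using takagi_bounds[of w] w by auto
  moreover have "(I - 1) * (1 - w) \<le> 0" using w I0 by (simp add: mult_nonpos_nonneg)
  ultimately show ?case by simp
next
  case (Suc n)
  have I0: "I \<le> 0" using Suc.prems(2) by (metis Dsum_0)
  have w: "0 < w" "w < 1" "w \<noteq> 1/2" using goodD[OF Suc.prems(1)] by auto
  have g: "good (step w)" using good_step[OF Suc.prems(1)] .
  show ?case
  proof (cases "w < 1/2")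
    case True
    have "\<forall>j. I - 1 \<le> Dsum (step w) j" using Suc.prems(2) Dsum_step_low[OF True] by simp
    from Suc.IH[OF g this] have "(I - 1 - 1) * (1 - 2 * w) + takagi (2 * w) \<le> (1/2)^n"
      using True by (simp add: step_def)
    moreover have "takagi w = w + takagi (2 * w) / 2" using takagi_low True w by auto
    hence "(I - 1) * (1 - w) + takagi w = ((I - 1 - 1) * (1 - 2 * w) + takagi (2 * w)) / 2 + I / 2" by (simp add: field_simps)
    ultimately show ?thesis using I0 half_step by blast
  next
    case False
    hence F: "w > 1/2" using w by auto
    have "\<forall>j. I + 1 \<le> Dsum (step w) j" using Suc.prems(2) Dsum_step_high[OF False] by simp
    from Suc.IH[OF g this] have "(I + 1 - 1) * (1 - (2 * w - 1)) + takagi (2 * w - 1) \<le> (1/2)^n"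
      using False by (simp add: step_def)
    moreover have "takagi w = (1 - w) + takagi (2 * w - 1) / 2" using takagi_high F w by auto
    hence "(I - 1) * (1 - w) + takagi w = ((I + 1 - 1) * (1 - (2 * w - 1)) + takagi (2 * w - 1)) / 2" by (simp add: field_simps)
    ultimately show ?thesis by simp
  qed
qed

lemma C1: "good w \<Longrightarrow> (\<forall>j. I \<le> Dsum w j) \<Longrightarrow> (I - 1) * (1 - w) \<le> - takagi w"
  using le_half_pow_imp[of "(I - 1) * (1 - w) + takagi w"] C1_aux by force



lemma exists_dyadic_bracket:
  assumes "0 < t" "t \<le> (1::real)"
  shows "\<exists>k. (1/2) ^ Suc k < t \<and> t \<le> (1/2) ^ k"
proof -
  obtain n where "1 / t < 2 ^ n" using real_arch_pow[of 2 "1/t"] by auto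
  hence "(1/2::real) ^ n < t" using assms by (simp add: field_simps power_one_over)
  hence ex: "\<exists>n. (1/2::real) ^ n < t" by blast
  let ?n = "LEAST n. (1/2::real) ^ n < t"
  have n1: "(1/2::real) ^ ?n < t" using LeastI_ex[OF ex] .
  have n0: "?n \<noteq> 0" using n1 assms by (metis power_0 not_less)
  then obtain k where k: "?n = Suc k" using not0_implies_Suc by blast
  have "\<not> (1/2::real) ^ k < t" using not_less_Least[of k "\<lambda>n. (1/2::real) ^ n < t"] k by simp
  thus ?thesis using n1 k by (intro exI[of _ k]) simp
qed

lemma local_pos:
  assumes u: "0 < u" "u < 1/2" and g: "good (2 * u)" and v: "1/2 < v" "v \<le> 1"
    and GD: "G \<le> D" and DS: "\<forall>j. G - D - 1 \<le> Dsum (2 * u) j"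
  shows "G - 1 \<le> D + (takagi v - takagi u) / (v - u)"
proof -
  have c1: "(G - D - 1 - 1) * (1 - 2 * u) \<le> - takagi (2 * u)" using C1[OF g DS] .
  have tu: "takagi u = u + takagi (2 * u) / 2" using takagi_low u by auto
  have tv: "takagi v = (1 - v) + takagi (2 * v - 1) / 2" using takagi_high v by auto
  have "0 \<le> takagi (2 * v - 1)" using takagi_bounds[of "2 * v - 1"] v by auto
  hence tv': "1 - v \<le> takagi v" using tv by simp
  have e1: "(G - D - 1 - 1) * (1 - 2 * u) = (G - 1 - D) * (1 - 2 * u) - (1 - 2 * u)"
    by (simp add: algebra_simps)
  have low: "(G - 1 - D) * (1 - 2 * u) - (2 * v - 1) \<le> 2 * takagi v - 2 * takagi u"
    using c1 tu tv' e1 by linarith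
  have "(G - D) * (2 * v - 1) \<le> 0" using v GD by (intro mult_nonpos_nonneg) auto
  moreover have "2 * ((G - 1 - D) * (v - u)) = (G - 1 - D) * (1 - 2 * u) + (G - D) * (2 * v - 1) - (2 * v - 1)"
    by (simp add: algebra_simps)
  ultimately have "2 * ((G - 1 - D) * (v - u)) \<le> 2 * takagi v - 2 * takagi u" using low by linarith
  hence "(G - 1 - D) * (v - u) \<le> takagi v - takagi u" by linarith
  hence "G - 1 - D \<le> (takagi v - takagi u) / (v - u)" using u v by (simp add: pos_le_divide_eq)
  thus ?thesis by simp
qed

lemma succ_le_pow2: "real j + 1 \<le> 2 ^ j"
proof (induction j)
  case (Suc j) thus ?case by simp
qed simp

lemma local_neg:
  assumes u: "1/2 < u" "u < 1" and g: "good (2 * u - 1)" and v: "0 \<le> v" "v < 1/2"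
    and GD: "G \<le> D" and DS: "\<forall>j. G - D + 1 \<le> Dsum (2 * u - 1) j"
    and q: "orb (2 * u - 1) q > 1/2" and R: "q + 1 \<le> R"
  shows "G - real R \<le> D + (takagi v - takagi u) / (v - u)"
proof -
  define w where "w = 2 * u - 1"
  define \<alpha> where "\<alpha> = u - 1/2"
  define \<beta> where "\<beta> = 1/2 - v"
  define t where "t = 1 - 2 * v"
  have ab: "\<alpha> > 0" "\<beta> > 0" "\<beta> \<le> 1/2" "t = 2 * \<beta>" "w = 2 * \<alpha>"
    using u v unfolding \<alpha>_def \<beta>_def t_def w_def by auto
  have c2: "(G - D + 1 + 1) * w \<le> takagi w" using C2[OF g DS] unfolding w_def .
  have tu: "takagi u = (1 - u) + takagi w / 2" using takagi_high u unfolding w_def by auto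
  have tv: "takagi v = v + takagi t / 2"
    using takagi_low v takagi_sym[of "2 * v"] unfolding t_def by auto
  obtain k where k: "(1/2) ^ Suc k < t" "t \<le> (1/2) ^ k"
    using exists_dyadic_bracket[of t] ab by auto
  have ts: "takagi t \<le> real k * t + (1/2) ^ k" using takagi_small[of t k] k ab by auto
  define e :: real where "e = (1/2) ^ Suc k"
  have tv': "takagi v \<le> v + real k * \<beta> + e" using tv ts ab unfolding e_def by simp
  have "(G - D + 1 + 1) * w = 2 * ((G - D + 2) * \<alpha>)" using ab by (simp add: algebra_simps)
  hence tu': "1 - u + (G - D + 2) * \<alpha> \<le> takagi u" using tu c2 by linarith
  have "orb w q \<le> 2 ^ q * w" by (rule orb_le)
  hence wq: "1/2 < 2 ^ q * w" using q unfolding w_def by simp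
  have aq: "(1/2) ^ (q + 2) < \<alpha>"
  proof -
    have "(1/2::real) ^ (q + 2) = 1 / (4 * 2 ^ q)" by (simp add: power_add power_one_over)
    also have "\<dots> < \<alpha>" using wq ab by (simp add: field_simps)
    finally show ?thesis .
  qed
  have Rq: "(1/2::real) ^ (R + 1) \<le> (1/2) ^ (q + 2)" using R by (intro power_decreasing) auto
  have key: "e + (real k - 1 + (G - D) - real R) * \<beta> \<le> (real R + 1) * \<alpha>"
  proof (cases "k + 1 \<le> R")
    case True
    have "e < 2 * \<beta>" using k ab unfolding e_def by simp
    moreover have "(real k - 1 + (G - D) - real R) * \<beta> \<le> (real k - 1 - real R) * \<beta>"
      using GD ab by (intro mult_right_mono) auto
    moreover have "(real k + 1 - real R) * \<beta> \<le> 0" using True ab by (intro mult_nonpos_nonneg) auto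
    moreover have "0 \<le> (real R + 1) * \<alpha>" using ab by simp
    moreover have "(real k - 1 - real R) * \<beta> = (real k + 1 - real R) * \<beta> - 2 * \<beta>" by (simp add: algebra_simps)
    ultimately show ?thesis by linarith
  next
    case False
    define j where "j = k - R"
    have j: "k = R + j" using False unfolding j_def by simp
    have be: "\<beta> \<le> e" using k ab unfolding e_def by simp
    have ej: "e = (1/2) ^ Suc j * (1/2) ^ R" unfolding e_def j by (simp add: power_add)
    have "(real k - 1 + (G - D) - real R) * \<beta> \<le> (real j - 1) * \<beta>"
      using GD ab j by (intro mult_right_mono) auto
    moreover have "real j * \<beta> \<le> real j * e" using be by (intro mult_left_mono) auto
    moreover have "(real j - 1) * \<beta> = real j * \<beta> - \<beta>" "(real j + 1) * e = real j * e + e"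
      by (simp_all add: algebra_simps)
    ultimately have "e + (real k - 1 + (G - D) - real R) * \<beta> \<le> (real j + 1) * e" using ab
      by linarith
    also have "\<dots> = ((real j + 1) * (1/2) ^ Suc j) * (1/2) ^ R" unfolding ej by simp
    also have "\<dots> \<le> (1/2) * (1/2) ^ R"
    proof -
      have "(real j + 1) * (1/2) ^ Suc j \<le> 2 ^ j * (1/2) ^ Suc j"
        using succ_le_pow2[of j] by (intro mult_right_mono) auto
      also have "\<dots> = 1/2" by (simp add: power_one_over)
      finally show ?thesis by (intro mult_right_mono) auto
    qed
    also have "\<dots> = (1/2) ^ (R + 1)" by simp
    also have "\<dots> \<le> \<alpha>" using Rq aq by simp
    also have "\<dots> \<le> (real R + 1) * \<alpha>" using ab by simp
    finally show ?thesis .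
  qed
  have "(G - real R - D) * (\<alpha> + \<beta>) \<le> takagi u - takagi v"
    using key tu' tv' unfolding \<alpha>_def \<beta>_def by (simp add: algebra_simps add_divide_distrib diff_divide_distrib)
  moreover have "\<alpha> + \<beta> = u - v" unfolding \<alpha>_def \<beta>_def by simp
  ultimately have "G - real R - D \<le> (takagi u - takagi v) / (u - v)" using u v by (simp add: pos_le_divide_eq)
  also have "(takagi u - takagi v) / (u - v) = (takagi v - takagi u) / (v - u)"
    by (metis minus_diff_eq minus_divide_divide)
  finally show ?thesis by simp
qed



definition Cond :: "real \<Rightarrow> bool" where
  "Cond x \<longleftrightarrow> (\<forall>M. \<exists>N. \<forall>m\<ge>N. \<forall>q. (\<forall>i<q. orb x (m + i) < 1/2) \<longrightarrow> (\<forall>j\<ge>m. M + real q \<le> Dsum x j))"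

lemma same_step: "same z y \<Longrightarrow> 0 \<le> step z + 2 * (y - z) \<and> step z + 2 * (y - z) \<le> 1"
  unfolding same_def step_def by auto

lemma same_bound: "same z y \<Longrightarrow> 0 \<le> z \<Longrightarrow> z \<le> 1 \<Longrightarrow> \<bar>y - z\<bar> \<le> 1/2"
  unfolding same_def by (auto simp: abs_if)

theorem core:
  assumes g: "good x" and C: "Cond x"
  shows "filterlim (\<lambda>h. (takagi (x + h) - takagi x) / h) at_top (at 0)"
  unfolding filterlim_at_top
proof
  fix Z :: real
  obtain N where N: "\<And>m q j. m \<ge> N \<Longrightarrow> (\<forall>i<q. orb x (m + i) < 1/2) \<Longrightarrow> j \<ge> m \<Longrightarrow> Z + 1 + real q \<le> Dsum x j"
    using C unfolding Cond_def by (metis (full_types))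
  define r where "r k = min (orb x k) (min (1 - orb x k) \<bar>orb x k - 1/2\<bar>)" for k
  have rpos: "r k > 0" for k using g unfolding good_def r_def by auto
  define \<delta> where "\<delta> = Min ((\<lambda>k. r k / 2 ^ k) ` {..N})"
  have \<delta>pos: "\<delta> > 0" unfolding \<delta>_def using rpos by (subst Min_gr_iff) auto
  have \<delta>le: "\<delta> \<le> r k / 2 ^ k" if "k \<le> N" for k unfolding \<delta>_def using that by (intro Min_le) auto
  show "eventually (\<lambda>h. Z \<le> (takagi (x + h) - takagi x) / h) (at 0)"
    unfolding eventually_at
  proof (intro exI[of _ \<delta>] conjI ballI impI)
    show "\<delta> > 0" by (rule \<delta>pos)
    fix h :: real assume "h \<in> UNIV" and hh: "h \<noteq> 0 \<and> dist h 0 < \<delta>"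
    hence h0: "h \<noteq> 0" and hd: "\<bar>h\<bar> < \<delta>" by auto
    let ?S = "\<lambda>k. same (orb x k) (orb x k + 2 ^ k * h)"
    have near: "?S k" if "k \<le> N" for k
    proof -
      have "\<bar>2 ^ k * h\<bar> < r k"
      proof -
        have "\<bar>2 ^ k * h\<bar> = 2 ^ k * \<bar>h\<bar>" by (simp add: abs_mult)
        also have "\<dots> < 2 ^ k * \<delta>" using hd by simp
        also have "\<dots> \<le> 2 ^ k * (r k / 2 ^ k)" using \<delta>le[OF that] by (intro mult_left_mono) auto
        also have "\<dots> = r k" by simp
        finally show ?thesis .
      qed
      moreover have "orb x k \<noteq> 1/2" using g unfolding good_def by auto
      ultimately show ?thesis unfolding same_def r_def by (auto simp: abs_less_iff)
    qed
    have ex: "\<exists>k. \<not> ?S k"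
    proof -
      obtain k where k: "1 / \<bar>h\<bar> < 2 ^ k" using real_arch_pow[of 2 "1 / \<bar>h\<bar>"] by auto
      hence "1 < 2 ^ k * \<bar>h\<bar>" using h0 by (simp add: field_simps)
      moreover have "0 \<le> orb x k" "orb x k \<le> 1" using g unfolding good_def by (auto simp: less_imp_le)
      ultimately have "\<not> ?S k" using same_bound[of "orb x k" "orb x k + 2 ^ k * h"] by (auto simp: abs_mult)
      thus ?thesis by blast
    qed
    define m where "m = (LEAST k. \<not> ?S k)"
    have nm: "\<not> ?S m" unfolding m_def using LeastI_ex[OF ex] .
    have before: "\<forall>k<m. ?S k" unfolding m_def using not_less_Least by blast
    have mN: "m > N" using near nm by (meson not_less)
    then obtain m' where m': "m = Suc m'" by (cases m) auto
    have lin': "takagi (x + h) - takagi x = Dsum x m * h + (takagi (orb x m + 2 ^ m * h) - takagi (orb x m)) / 2 ^ m"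
      by (rule lin[OF g before])
    define u where "u = orb x m"
    define v where "v = orb x m + 2 ^ m * h"
    define D where "D = Dsum x m"
    have vu: "v - u = 2 ^ m * h" unfolding u_def v_def by simp
    have Sm': "?S m'" using before m' by simp
    have "0 \<le> v \<and> v \<le> 1"
      using same_step[OF Sm'] unfolding v_def m' orb_Suc by (simp add: algebra_simps)
    hence v01: "0 \<le> v" "v \<le> 1" by auto
    have u01: "0 < u" "u < 1" "u \<noteq> 1/2" using g unfolding good_def u_def by auto
    have Q: "(takagi (x + h) - takagi x) / h = D + (takagi v - takagi u) / (v - u)"
      unfolding lin' vu using h0 unfolding u_def v_def D_def by (simp add: field_simps)
    have gS: "good (orb x (Suc m))" using good_orb[OF g] .
    have DSuc: "Dsum x (Suc m) = D + sg u" unfolding D_def u_def by (simp add: Dsum_Suc)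
    have Dadd: "Dsum x (Suc m + j) = Dsum x (Suc m) + Dsum (orb x (Suc m)) j" for j by (rule Dsum_add)
    show "Z \<le> (takagi (x + h) - takagi x) / h"
    proof (cases "u < 1/2")
      case True
      hence v2: "1/2 < v" using nm v01 unfolding same_def u_def v_def by auto
      have sw: "orb x (Suc m) = 2 * u" using True unfolding u_def by (simp add: orb_Suc step_def)
      have sgu: "sg u = 1" using True by (simp add: sg_def)
      have all: "Z + 1 \<le> Dsum x j" if "j \<ge> m" for j using N[of m 0 j] mN that by simp
      have GD: "Z + 1 \<le> D" using all[of m] unfolding D_def by simp
      have DS: "\<forall>j. (Z + 1) - D - 1 \<le> Dsum (2 * u) j"
      proof
        fix j
        have "Z + 1 \<le> Dsum x (Suc m + j)" using all by simp
        thus "(Z + 1) - D - 1 \<le> Dsum (2 * u) j" using Dadd[of j] DSuc sgu sw by simp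
      qed
      have "(Z + 1) - 1 \<le> D + (takagi v - takagi u) / (v - u)"
        using local_pos[OF u01(1) True _ v2 v01(2) GD DS] gS sw by simp
      thus ?thesis unfolding Q by simp
    next
      case False
      hence F: "u > 1/2" using u01 by auto
      hence v2: "v < 1/2" using nm v01 unfolding same_def u_def v_def by auto
      have sw: "orb x (Suc m) = 2 * u - 1" using False unfolding u_def by (simp add: orb_Suc step_def)
      have sgu: "sg u = -1" using False by (simp add: sg_def)
      define w where "w = 2 * u - 1"
      have gw: "good w" using gS sw unfolding w_def by simp
      have exq: "\<exists>q. orb w q > 1/2" by (rule good_has_one[OF gw])
      define q where "q = (LEAST q. orb w q > 1/2)"
      have q1: "orb w q > 1/2" unfolding q_def using LeastI_ex[OF exq] .
      have qz: "\<forall>i<q. orb x (Suc m + i) < 1/2"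
      proof (intro allI impI)
        fix i assume "i < q"
        hence "\<not> orb w i > 1/2" unfolding q_def using not_less_Least by blast
        moreover have "orb w i \<noteq> 1/2" using gw unfolding good_def by auto
        ultimately have "orb w i < 1/2" by auto
        moreover have "orb x (Suc m + i) = orb w i" using orb_add[of x "Suc m" i] sw unfolding w_def by metis
        ultimately show "orb x (Suc m + i) < 1/2" by simp
      qed
      have all: "Z + 1 + real q \<le> Dsum x j" if "j \<ge> Suc m" for j
        using N[of "Suc m" q j] mN that qz by simp
      have GD: "Z + 1 + real q \<le> D" using all[of "Suc m"] DSuc sgu by simp
      have DS: "\<forall>j. (Z + 1 + real q) - D + 1 \<le> Dsum (2 * u - 1) j"
      proof
        fix j
        have "Z + 1 + real q \<le> Dsum x (Suc m + j)" using all by simp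
        thus "(Z + 1 + real q) - D + 1 \<le> Dsum (2 * u - 1) j" using Dadd[of j] DSuc sgu sw by simp
      qed
      have "(Z + 1 + real q) - real (q + 1) \<le> D + (takagi v - takagi u) / (v - u)"
        using local_neg[OF F u01(2) _ v01(1) v2 GD DS, of q "q + 1"] gw q1 unfolding w_def by simp
      thus ?thesis unfolding Q by simp
    qed
  qed
qed



lemma nd_avoid:
  assumes nd: "\<not> dyadic x"
  shows "2 ^ n * x - real_of_int j \<noteq> 0" "2 ^ n * x - real_of_int j \<noteq> 1/2" "2 ^ n * x - real_of_int j \<noteq> 1"
proof -
  show "2 ^ n * x - real_of_int j \<noteq> 0"
  proof
    assume "2 ^ n * x - real_of_int j = 0"
    hence "x = real_of_int j / 2 ^ n" by (simp add: field_simps)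
    thus False using nd unfolding dyadic_def by blast
  qed
  show "2 ^ n * x - real_of_int j \<noteq> 1"
  proof
    assume "2 ^ n * x - real_of_int j = 1"
    hence "x = real_of_int (j + 1) / 2 ^ n" by (simp add: field_simps)
    thus False using nd unfolding dyadic_def by blast
  qed
  show "2 ^ n * x - real_of_int j \<noteq> 1/2"
  proof
    assume "2 ^ n * x - real_of_int j = 1/2"
    hence "x = real_of_int (2 * j + 1) / 2 ^ Suc n" by (simp add: field_simps)
    thus False using nd unfolding dyadic_def by blast
  qed
qed

lemma good_of_nondyadic:
  assumes x: "0 < x" "x < 1" and nd: "\<not> dyadic x"
  shows "good x"
proof -
  have "(\<exists>j::int. orb x k = 2 ^ k * x - real_of_int j) \<and> 0 < orb x k \<and> orb x k < 1 \<and> orb x k \<noteq> 1/2" for k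
  proof (induction k)
    case 0
    have "x \<noteq> 1/2" using nd_avoid(2)[OF nd, of 0 0] by simp
    thus ?case using x by (auto intro: exI[of _ 0])
  next
    case (Suc k)
    then obtain j where j: "orb x k = 2 ^ k * x - real_of_int j" by blast
    have r: "0 < orb x k" "orb x k < 1" "orb x k \<noteq> 1/2" using Suc by auto
    show ?case
    proof (cases "orb x k < 1/2")
      case True
      have e: "orb x (Suc k) = 2 ^ Suc k * x - real_of_int (2 * j)" using True j by (simp add: orb_Suc step_def)
      have "orb x (Suc k) \<noteq> 1/2" using nd_avoid(2)[OF nd, of "Suc k" "2 * j"] e by simp
      thus ?thesis using e True r by (auto simp: orb_Suc step_def intro!: exI[of _ "2 * j"])
    next
      case False
      have e: "orb x (Suc k) = 2 ^ Suc k * x - real_of_int (2 * j + 1)" using False j by (simp add: orb_Suc step_def)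
      have "orb x (Suc k) \<noteq> 1/2" using nd_avoid(2)[OF nd, of "Suc k" "2 * j + 1"] e by simp
      moreover have "orb x (Suc k) \<noteq> 0" using nd_avoid(1)[OF nd, of "Suc k" "2 * j + 1"] e by simp
      ultimately show ?thesis using e False r by (auto simp: orb_Suc step_def intro!: exI[of _ "2 * j + 1"])
    qed
  qed
  thus ?thesis unfolding good_def by blast
qed

lemma digit_step:
  fixes c :: "nat \<Rightarrow> nat"
  assumes g: "good w" and c: "\<forall>k\<ge>1. c k \<in> {0, 1}"
    and s: "(\<lambda>k. real (c (Suc k)) / 2 ^ Suc k) sums w"
  shows "(c 1 = 1 \<longleftrightarrow> w > 1/2) \<and> (\<lambda>k. real (c (Suc (Suc k))) / 2 ^ Suc k) sums step w"
proof -
  let ?f = "\<lambda>k. real (c (Suc k)) / 2 ^ Suc k"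
  have "(\<lambda>k. ?f (Suc k)) sums (w - ?f 0)" using s sums_Suc_iff[of ?f "w - ?f 0"] by simp
  hence "(\<lambda>k. 2 * ?f (Suc k)) sums (2 * (w - ?f 0))" by (rule sums_mult)
  moreover have "(\<lambda>k. 2 * ?f (Suc k)) = (\<lambda>k. real (c (Suc (Suc k))) / 2 ^ Suc k)"
    by (rule ext) (simp add: power_Suc)
  ultimately have s2: "(\<lambda>k. real (c (Suc (Suc k))) / 2 ^ Suc k) sums (2 * w - real (c 1))"
    by (simp add: algebra_simps)
  have cb: "real (c (Suc (Suc k))) \<le> 1" for k using c[rule_format, of "Suc (Suc k)"] by auto
  have y1: "2 * w - real (c 1) \<le> 1"
  proof (rule sums_le[OF _ s2 power_half_series])
    fix n show "real (c (Suc (Suc n))) / 2 ^ Suc n \<le> (1/2) ^ Suc n"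
      using cb[of n] by (simp add: power_one_over divide_right_mono)
  qed
  have y0: "0 \<le> 2 * w - real (c 1)"
    by (rule sums_le[OF _ sums_zero s2]) simp
  have w: "0 < w" "w < 1" "w \<noteq> 1/2" using goodD[OF g] by auto
  have c1: "c 1 = 0 \<or> c 1 = 1" using c by auto
  show ?thesis
  proof (cases "c 1 = 1")
    case True
    hence "w > 1/2" using y0 w by auto
    thus ?thesis using True s2 by (simp add: step_def)
  next
    case False
    hence "c 1 = 0" using c1 by auto
    hence "w < 1/2" using y1 w by auto
    thus ?thesis using False \<open>c 1 = 0\<close> s2 by (simp add: step_def)
  qed
qed

lemma digits_orb:
  fixes c :: "nat \<Rightarrow> nat"
  assumes "good w" "\<forall>k\<ge>1. c k \<in> {0, 1}" "(\<lambda>k. real (c (Suc k)) / 2 ^ Suc k) sums w"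
  shows "c (Suc k) = 1 \<longleftrightarrow> orb w k > 1/2"
  using assms
proof (induction k arbitrary: c w)
  case 0 thus ?case using digit_step[of w c] by simp
next
  case (Suc k)
  have d: "(\<lambda>k. real (c (Suc (Suc k))) / 2 ^ Suc k) sums step w" using digit_step[OF Suc.prems] by blast
  have c': "\<forall>k\<ge>1. (c \<circ> Suc) k \<in> {0, 1}" using Suc.prems(2) by auto
  have "(c \<circ> Suc) (Suc k) = 1 \<longleftrightarrow> orb (step w) k > 1/2"
    using Suc.IH[OF good_step[OF Suc.prems(1)] c'] d by simp
  thus ?case by (simp add: orb_Suc')
qed

lemma range_digits:
  fixes a :: "nat \<Rightarrow> nat"
  assumes g: "good x" and am: "strict_mono a" and ap: "\<forall>n. a n \<ge> 1"
    and as: "(\<lambda>n. (1/2) ^ a n) sums x"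
  shows "Suc k \<in> range a \<longleftrightarrow> orb x k > 1/2"
proof -
  define c :: "nat \<Rightarrow> nat" where "c k = (if k \<in> range a then 1 else 0)" for k
  define f :: "nat \<Rightarrow> real" where "f k = (if k \<in> range a then (1/2) ^ k else 0)" for k
  have "(\<lambda>n. f (a n)) = (\<lambda>n. (1/2) ^ a n)" unfolding f_def by auto
  hence "(\<lambda>n. f (a n)) sums x" using as by simp
  hence fs: "f sums x" using sums_mono_reindex[OF am, of f x] unfolding f_def by auto
  have an: "a n \<noteq> 0" for n using ap[rule_format, of n] by simp
  have f0: "f 0 = 0" unfolding f_def using an by (auto simp: image_iff)
  have "(\<lambda>k. f (Suc k)) sums x" using sums_Suc_iff[of f x] fs f0 by simp
  moreover have "(\<lambda>k. f (Suc k)) = (\<lambda>k. real (c (Suc k)) / 2 ^ Suc k)"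
    unfolding f_def c_def by (auto simp: power_one_over)
  ultimately have cs: "(\<lambda>k. real (c (Suc k)) / 2 ^ Suc k) sums x" by simp
  have "c (Suc k) = 1 \<longleftrightarrow> orb x k > 1/2"
    by (rule digits_orb[OF g _ cs]) (auto simp: c_def)
  moreover have "c (Suc k) = 1 \<longleftrightarrow> Suc k \<in> range a" unfolding c_def by simp
  ultimately show ?thesis by blast
qed

lemma Dsum_eps:
  fixes e :: "nat \<Rightarrow> nat"
  assumes g: "good x" and eb: "\<forall>k\<ge>1. e k \<in> {0, 1}" and ed: "\<And>k. e (Suc k) = 1 \<longleftrightarrow> orb x k > 1/2"
  shows "Dsum x n = real n - 2 * (\<Sum>k=1..n. real (e k))"
proof (induction n)
  case 0 thus ?case by simp
next
  case (Suc n)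
  have "orb x n \<noteq> 1/2" using g unfolding good_def by auto
  moreover have "e (Suc n) = 0 \<or> e (Suc n) = 1" using eb by auto
  ultimately have "sg (orb x n) = 1 - 2 * real (e (Suc n))" using ed[of n] unfolding sg_def by auto
  thus ?case using Suc by (simp add: Dsum_Suc algebra_simps)
qed



lemma zero_run: "(\<forall>i<q. orb x (m + i) < 1/2) \<Longrightarrow> Dsum x (m + q) = Dsum x m + real q"
proof (induction q)
  case 0 thus ?case by simp
next
  case (Suc q)
  hence "Dsum x (m + q) = Dsum x m + real q" by simp
  moreover have "orb x (m + q) < 1/2" using Suc.prems by simp
  ultimately show ?case by (simp add: Dsum_Suc sg_def)
qed

lemma lim_bounds:
  assumes "(\<lambda>n. Dsum x n / real n) \<longlonglongrightarrow> L" "\<eta> > 0"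
  obtains N0 where "\<And>n. n \<ge> N0 \<Longrightarrow> (L - \<eta>) * real n \<le> Dsum x n \<and> Dsum x n \<le> (L + \<eta>) * real n"
proof -
  obtain N1 where N1: "\<And>n. n \<ge> N1 \<Longrightarrow> norm (Dsum x n / real n - L) < \<eta>"
    using LIMSEQ_D[OF assms] by blast
  have "(L - \<eta>) * real n \<le> Dsum x n \<and> Dsum x n \<le> (L + \<eta>) * real n" if "n \<ge> max N1 1" for n
  proof -
    have n: "real n > 0" using that by simp
    have "\<bar>Dsum x n / real n - L\<bar> < \<eta>" using N1[of n] that by simp
    hence "L - \<eta> < Dsum x n / real n" "Dsum x n / real n < L + \<eta>" by auto
    thus ?thesis using n by (simp add: field_simps)
  qed
  thus ?thesis using that by blast
qed

lemma cond_a: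
  assumes lim: "(\<lambda>n. Dsum x n / real n) \<longlonglongrightarrow> L" and L: "0 < L" "L < 1"
  shows "Cond x"
  unfolding Cond_def
proof
  fix M :: real
  define \<eta> where "\<eta> = min (L/4) (L * (1 - L) / 16)"
  have \<eta>: "\<eta> > 0" "\<eta> \<le> L/4" "\<eta> \<le> L * (1 - L) / 16" using L unfolding \<eta>_def by auto
  have \<eta>2: "\<eta> \<le> (1 - L) / 2"
  proof -
    have "L * (1 - L) \<le> 1 * (1 - L)" using L by (intro mult_right_mono) auto
    thus ?thesis using \<eta> by simp
  qed
  obtain N0 where N0: "\<And>n. n \<ge> N0 \<Longrightarrow> (L - \<eta>) * real n \<le> Dsum x n \<and> Dsum x n \<le> (L + \<eta>) * real n"
    using lim_bounds[OF lim \<eta>(1)] by blast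
  define N where "N = max N0 (nat \<lceil>2 * M / L\<rceil>)"
  show "\<exists>N. \<forall>m\<ge>N. \<forall>q. (\<forall>i<q. orb x (m + i) < 1/2) \<longrightarrow> (\<forall>j\<ge>m. M + real q \<le> Dsum x j)"
  proof (intro exI[of _ N] allI impI)
    fix m q j assume m: "m \<ge> N" and run: "\<forall>i<q. orb x (m + i) < 1/2" and j: "j \<ge> m"
    have mN0: "m \<ge> N0" using m unfolding N_def by simp
    have mM: "2 * M / L \<le> real m"
    proof -
      have "2 * M / L \<le> real (nat \<lceil>2 * M / L\<rceil>)" by linarith
      also have "\<dots> \<le> real m" using m unfolding N_def by simp
      finally show ?thesis .
    qed
    hence mM': "M \<le> L * real m / 2" using L by (simp add: field_simps)
    have zr: "Dsum x (m + q) = Dsum x m + real q" by (rule zero_run[OF run])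
    have b1: "Dsum x (m + q) \<le> (L + \<eta>) * (real m + real q)" using N0[of "m + q"] mN0 by simp
    have b2: "(L - \<eta>) * real m \<le> Dsum x m" using N0[of m] mN0 by simp
    have "real q \<le> (L + \<eta>) * (real m + real q) - (L - \<eta>) * real m" using zr b1 b2 by linarith
    hence q1: "real q * (1 - L - \<eta>) \<le> 2 * \<eta> * real m" by (simp add: algebra_simps)
    have q2: "real q * ((1 - L) / 2) \<le> real q * (1 - L - \<eta>)" using \<eta>2 by (intro mult_left_mono) auto
    have q3: "2 * \<eta> * real m \<le> (L * (1 - L) / 8) * real m" using \<eta> by (intro mult_right_mono) auto
    have "real q * ((1 - L) / 2) \<le> (L * (1 - L) / 8) * real m" using q1 q2 q3 by linarith
    hence "real q * (1 - L) \<le> (L * real m / 4) * (1 - L)" by (simp add: field_simps)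
    hence qb: "real q \<le> L * real m / 4" using L by (simp add: mult_le_cancel_right)
    have "(L - \<eta>) * real m \<le> (L - \<eta>) * real j" using j \<eta> by (intro mult_left_mono) auto
    moreover have "(L - \<eta>) * real j \<le> Dsum x j" using N0[of j] mN0 j by simp
    moreover have "(3 * L / 4) * real m \<le> (L - \<eta>) * real m" using \<eta> by (intro mult_right_mono) auto
    ultimately have "(3 * L / 4) * real m \<le> Dsum x j" by linarith
    thus "M + real q \<le> Dsum x j" using qb mM' by (simp add: algebra_simps)
  qed
qed

lemma cond_b:
  fixes a :: "nat \<Rightarrow> nat"
  assumes lim: "(\<lambda>n. Dsum x n / real n) \<longlonglongrightarrow> 1" and am: "strict_mono a"
    and dig: "\<And>k. Suc k \<in> range a \<longleftrightarrow> orb x k > 1/2"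
    and c: "1 \<le> c" "c < 2" and ev: "\<And>i. i \<ge> i0 \<Longrightarrow> real (a (Suc i)) < c * real (a i)"
  shows "Cond x"
  unfolding Cond_def
proof
  fix M :: real
  define \<kappa> where "\<kappa> = 2 - c"
  have \<kappa>: "0 < \<kappa>" "\<kappa> \<le> 1" using c unfolding \<kappa>_def by auto
  obtain N0 where N0: "\<And>n. n \<ge> N0 \<Longrightarrow> (1 - \<kappa>/2) * real n \<le> Dsum x n \<and> Dsum x n \<le> (1 + \<kappa>/2) * real n"
    using lim_bounds[OF lim, of "\<kappa>/2"] \<kappa> by auto
  define N where "N = max (max N0 (a i0)) (nat \<lceil>2 * M / \<kappa>\<rceil>)"
  show "\<exists>N. \<forall>m\<ge>N. \<forall>q. (\<forall>i<q. orb x (m + i) < 1/2) \<longrightarrow> (\<forall>j\<ge>m. M + real q \<le> Dsum x j)"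
  proof (intro exI[of _ N] allI impI)
    fix m q j assume m: "m \<ge> N" and run: "\<forall>i<q. orb x (m + i) < 1/2" and j: "j \<ge> m"
    have mN0: "m \<ge> N0" and mai0: "a i0 \<le> m" using m unfolding N_def by auto
    have mM: "2 * M / \<kappa> \<le> real m"
    proof -
      have "2 * M / \<kappa> \<le> real (nat \<lceil>2 * M / \<kappa>\<rceil>)" by linarith
      also have "\<dots> \<le> real m" using m unfolding N_def by simp
      finally show ?thesis .
    qed
    hence mM': "M \<le> \<kappa> * real m / 2" using \<kappa> by (simp add: field_simps)
    have exi: "\<exists>i. m < a i" using strict_mono_imp_increasing[OF am, of "Suc m"] by (intro exI[of _ "Suc m"]) simp
    define i1 where "i1 = (LEAST i. m < a i)"
    have i1: "m < a i1" unfolding i1_def using LeastI_ex[OF exi] .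
    have a0: "a 0 \<le> a i0" using am by (simp add: strict_mono_less_eq)
    have "i1 \<noteq> 0"
    proof
      assume "i1 = 0" thus False using i1 a0 mai0 by simp
    qed
    then obtain i where i: "i1 = Suc i" by (cases i1) auto
    have ai: "a i \<le> m" using not_less_Least[of i "\<lambda>i. m < a i"] i unfolding i1_def by simp
    have asi: "m < a (Suc i)" using i1 i by simp
    have ii0: "i \<ge> i0"
    proof (rule ccontr)
      assume "\<not> i \<ge> i0"
      hence "Suc i \<le> i0" by simp
      hence "a (Suc i) \<le> a i0" using am by (simp add: strict_mono_less_eq)
      thus False using asi mai0 by simp
    qed
    have big: "m + q < a (Suc i)"
    proof (rule ccontr)
      assume "\<not> m + q < a (Suc i)"
      hence le: "a (Suc i) \<le> m + q" by simp
      define i' where "i' = a (Suc i) - m - 1"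
      have i'q: "i' < q" and ai': "a (Suc i) = Suc (m + i')" using le asi unfolding i'_def by auto
      have "Suc (m + i') \<in> range a" using ai' by (metis rangeI)
      hence "orb x (m + i') > 1/2" using dig by blast
      thus False using run i'q by force
    qed
    have "real (a (Suc i)) < c * real (a i)" using ev ii0 by blast
    also have "\<dots> \<le> c * real m" using ai c by (intro mult_left_mono) auto
    finally have mq: "real m + real q < c * real m" using big by linarith
    have cm: "c * real m = 2 * real m - \<kappa> * real m" unfolding \<kappa>_def by (simp add: algebra_simps)
    have f2: "real q \<le> real m - \<kappa> * real m" using mq cm by linarith
    have "(1 - \<kappa>/2) * real m \<le> (1 - \<kappa>/2) * real j" using j \<kappa> by (intro mult_left_mono) auto
    moreover have "(1 - \<kappa>/2) * real j \<le> Dsum x j" using N0[of j] mN0 j by simp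
    moreover have "(1 - \<kappa>/2) * real m = real m - \<kappa> * real m / 2" by (simp add: algebra_simps)
    ultimately have f1: "real m - \<kappa> * real m / 2 \<le> Dsum x j" by linarith
    show "M + real q \<le> Dsum x j" using f1 f2 mM' by linarith
  qed
qed



lemma part1:
  fixes x d :: real and e a :: "nat \<Rightarrow> nat"
  assumes x: "0 < x" "x < 1" and nd: "\<not> dyadic x"
    and eb: "\<forall>k\<ge>1. e k \<in> {0, 1}"
    and es: "(\<lambda>k. real (e (Suc k)) / 2 ^ Suc k) sums x"
    and am: "strict_mono a" and ap: "\<forall>n. a n \<ge> 1"
    and as: "(\<lambda>n. (1/2) ^ a n) sums x"
    and lim: "(\<lambda>n. (\<Sum>k=1..n. real (e k)) / real n) \<longlonglongrightarrow> d"
    and cnd: "(0 < d \<and> d < 1/2) \<or> (d = 0 \<and> limsup (\<lambda>n. ereal (real (a (Suc n)) / real (a n))) < 2)"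
  shows "filterlim (\<lambda>h. (takagi (x + h) - takagi x) / h) at_top (at 0)"
proof -
  have g: "good x" by (rule good_of_nondyadic[OF x nd])
  have ed: "\<And>k. e (Suc k) = 1 \<longleftrightarrow> orb x k > 1/2" by (rule digits_orb[OF g eb es])
  have DE: "\<And>n. Dsum x n = real n - 2 * (\<Sum>k=1..n. real (e k))" by (rule Dsum_eps[OF g eb ed])
  have l1: "(\<lambda>n. 1 - 2 * ((\<Sum>k=1..n. real (e k)) / real n)) \<longlonglongrightarrow> 1 - 2 * d"
    by (intro tendsto_intros lim)
  have ev0: "eventually (\<lambda>n. 1 - 2 * ((\<Sum>k=1..n. real (e k)) / real n) = Dsum x n / real n) sequentially"
    unfolding eventually_sequentially
  proof (intro exI[of _ 1] allI impI)
    fix n :: nat assume "n \<ge> 1"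
    hence "real n > 0" by simp
    thus "1 - 2 * ((\<Sum>k=1..n. real (e k)) / real n) = Dsum x n / real n" unfolding DE by (simp add: field_simps)
  qed
  have limD: "(\<lambda>n. Dsum x n / real n) \<longlonglongrightarrow> 1 - 2 * d" using l1 tendsto_cong[OF ev0] by simp
  have C: "Cond x"
  proof (cases "0 < d \<and> d < 1/2")
    case True
    hence "0 < 1 - 2 * d" "1 - 2 * d < 1" by auto
    thus ?thesis by (rule cond_a[OF limD])
  next
    case False
    hence d0: "d = 0" and ls: "limsup (\<lambda>n. ereal (real (a (Suc n)) / real (a n))) < 2" using cnd by auto
    obtain z where z: "limsup (\<lambda>n. ereal (real (a (Suc n)) / real (a n))) < ereal z" "ereal z < 2"
      using ereal_dense2[OF ls] by blast
    have "eventually (\<lambda>n. ereal (real (a (Suc n)) / real (a n)) < ereal z) sequentially"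
      by (rule Limsup_lessD[OF z(1)])
    then obtain i0 where i0: "\<And>n. n \<ge> i0 \<Longrightarrow> real (a (Suc n)) / real (a n) < z"
      unfolding eventually_sequentially by auto
    define c where "c = max z 1"
    have c: "1 \<le> c" "c < 2" using z(2) unfolding c_def by auto
    have ev: "real (a (Suc i)) < c * real (a i)" if "i \<ge> i0" for i
    proof -
      have pos: "real (a i) > 0" using ap[rule_format, of i] by simp
      have "real (a (Suc i)) < z * real (a i)" using i0[OF that] pos by (simp add: field_simps)
      also have "\<dots> \<le> c * real (a i)" using pos unfolding c_def by (intro mult_right_mono) auto
      finally show ?thesis .
    qed
    have dig: "\<And>k. Suc k \<in> range a \<longleftrightarrow> orb x k > 1/2" by (rule range_digits[OF g am ap as])
    have "(\<lambda>n. Dsum x n / real n) \<longlonglongrightarrow> 1" using limD d0 by simp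
    thus ?thesis by (rule cond_b[OF _ am dig c ev])
  qed
  show ?thesis by (rule core[OF g C])
qed



lemma flip_lim:
  assumes "filterlim (\<lambda>h. (takagi (1 - x + h) - takagi (1 - x)) / h) at_top (at 0)"
  shows "filterlim (\<lambda>h. (takagi (x + h) - takagi x) / h) at_bot (at 0)"
  unfolding filterlim_at_bot
proof
  fix Z :: real
  have "eventually (\<lambda>h. - Z \<le> (takagi (1 - x + h) - takagi (1 - x)) / h) (at 0)"
    using assms unfolding filterlim_at_top by blast
  then obtain \<delta> where \<delta>: "\<delta> > 0"
    and P: "\<And>h. h \<noteq> 0 \<Longrightarrow> dist h 0 < \<delta> \<Longrightarrow> - Z \<le> (takagi (1 - x + h) - takagi (1 - x)) / h"
    unfolding eventually_at by auto
  show "eventually (\<lambda>h. (takagi (x + h) - takagi x) / h \<le> Z) (at 0)"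
    unfolding eventually_at
  proof (intro exI[of _ \<delta>] conjI ballI impI)
    show "\<delta> > 0" by (rule \<delta>)
    fix h :: real assume "h \<in> UNIV" "h \<noteq> 0 \<and> dist h 0 < \<delta>"
    hence h: "- h \<noteq> 0" "dist (- h) 0 < \<delta>" by auto
    have "- Z \<le> (takagi (1 - x + - h) - takagi (1 - x)) / (- h)" by (rule P[OF h])
    moreover have "takagi (1 - x + - h) = takagi (x + h)" using takagi_sym[of "x + h"] by (simp add: algebra_simps)
    moreover have "takagi (1 - x) = takagi x" by (rule takagi_sym)
    ultimately have "- Z \<le> - ((takagi (x + h) - takagi x) / h)" by simp
    thus "(takagi (x + h) - takagi x) / h \<le> Z" by simp
  qed
qed

theorem corollary2:
  fixes x d :: real and eps :: "nat \<Rightarrow> nat" and a b :: "nat \<Rightarrow> nat"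
  assumes x_in: "0 < x" "x < 1"
    and nondyadic: "\<not> dyadic x"
    and eps_digits: "\<forall>k\<ge>1. eps k \<in> {0, 1}"
    and eps_sums: "(\<lambda>k. real (eps (Suc k)) / 2 ^ Suc k) sums x"
    and a_mono: "strict_mono a" and a_pos: "\<forall>n. a n \<ge> 1"
    and a_sums: "(\<lambda>n. (1/2) ^ a n) sums x"
    and b_mono: "strict_mono b" and b_pos: "\<forall>n. b n \<ge> 1"
    and b_sums: "(\<lambda>n. (1/2) ^ b n) sums (1 - x)"
    and d1: "(\<lambda>n. (\<Sum>k=1..n. real (eps k)) / real n) \<longlonglongrightarrow> d"
  shows "(((0 < d \<and> d < 1/2) \<or>
           (d = 0 \<and> limsup (\<lambda>n. ereal (real (a (Suc n)) / real (a n))) < 2))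
          \<longrightarrow> filterlim (\<lambda>h. (takagi (x + h) - takagi x) / h) at_top (at 0))
        \<and> (((1/2 < d \<and> d < 1) \<or>
           (d = 1 \<and> limsup (\<lambda>n. ereal (real (b (Suc n)) / real (b n))) < 2))
          \<longrightarrow> filterlim (\<lambda>h. (takagi (x + h) - takagi x) / h) at_bot (at 0))"
proof (intro conjI impI)
  assume "(0 < d \<and> d < 1/2) \<or> (d = 0 \<and> limsup (\<lambda>n. ereal (real (a (Suc n)) / real (a n))) < 2)"
  thus "filterlim (\<lambda>h. (takagi (x + h) - takagi x) / h) at_top (at 0)"
    by (rule part1[OF x_in nondyadic eps_digits eps_sums a_mono a_pos a_sums d1])
next
  assume cnd: "(1/2 < d \<and> d < 1) \<or> (d = 1 \<and> limsup (\<lambda>n. ereal (real (b (Suc n)) / real (b n))) < 2)"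
  define e :: "nat \<Rightarrow> nat" where "e k = 1 - eps k" for k
  have x': "0 < 1 - x" "1 - x < 1" using x_in by auto
  have nd': "\<not> dyadic (1 - x)"
  proof
    assume "dyadic (1 - x)"
    then obtain k :: int and m :: nat where "1 - x = real_of_int k / 2 ^ m" unfolding dyadic_def by blast
    hence "x = real_of_int (2 ^ m - k) / 2 ^ m" by (simp add: field_simps)
    thus False using nondyadic unfolding dyadic_def by blast
  qed
  have eb: "\<forall>k\<ge>1. e k \<in> {0, 1}" using eps_digits unfolding e_def by auto
  have ereal': "real (e k) = 1 - real (eps k)" if "k \<ge> 1" for k
    using eps_digits that unfolding e_def by auto
  have "(\<lambda>k. (1/2::real) ^ Suc k - real (eps (Suc k)) / 2 ^ Suc k) sums (1 - x)"
    by (rule sums_diff[OF power_half_series eps_sums])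
  moreover have "(\<lambda>k. (1/2::real) ^ Suc k - real (eps (Suc k)) / 2 ^ Suc k) = (\<lambda>k. real (e (Suc k)) / 2 ^ Suc k)"
    by (rule ext) (simp add: ereal' power_one_over diff_divide_distrib)
  ultimately have es: "(\<lambda>k. real (e (Suc k)) / 2 ^ Suc k) sums (1 - x)" by simp
  have l1: "(\<lambda>n. 1 - (\<Sum>k=1..n. real (eps k)) / real n) \<longlonglongrightarrow> 1 - d" by (intro tendsto_intros d1)
  have ev0: "eventually (\<lambda>n. 1 - (\<Sum>k=1..n. real (eps k)) / real n = (\<Sum>k=1..n. real (e k)) / real n) sequentially"
    unfolding eventually_sequentially
  proof (intro exI[of _ 1] allI impI)
    fix n :: nat assume "n \<ge> 1"
    hence n: "real n > 0" by simp
    have "(\<Sum>k=1..n. real (e k)) = (\<Sum>k=1..n. 1 - real (eps k))" by (rule sum.cong) (auto simp: ereal')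
    also have "\<dots> = real n - (\<Sum>k=1..n. real (eps k))" by (simp add: sum_subtractf)
    finally show "1 - (\<Sum>k=1..n. real (eps k)) / real n = (\<Sum>k=1..n. real (e k)) / real n"
      using n by (simp add: field_simps)
  qed
  have lim': "(\<lambda>n. (\<Sum>k=1..n. real (e k)) / real n) \<longlonglongrightarrow> 1 - d" using l1 tendsto_cong[OF ev0] by simp
  have cnd': "(0 < 1 - d \<and> 1 - d < 1/2) \<or> (1 - d = 0 \<and> limsup (\<lambda>n. ereal (real (b (Suc n)) / real (b n))) < 2)"
    using cnd by auto
  have "filterlim (\<lambda>h. (takagi (1 - x + h) - takagi (1 - x)) / h) at_top (at 0)"
    by (rule part1[OF x' nd' eb es b_mono b_pos b_sums lim' cnd'])
  thus "filterlim (\<lambda>h. (takagi (x + h) - takagi x) / h) at_bot (at 0)" by (rule flip_lim)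
qed


end
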